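(* Let $\mathcal{J}$ be a finite set of content points and fix a provider $k$ with skill beliefs $\widetilde{S}_k=(\widetilde{s}_{k,j})_{j\in\mathcal{J}}$, $\widetilde{s}_{k,j}\in(0,1]$, and audience beliefs $\widetilde{A}_k=(\widetilde{a}_{k,j})_{j\in\mathcal{J}}$, $\widetilde{a}_{k,j}\ge 0$. For $j\in\mathcal{J}$ and trust $\lambda\in(0,1]$ define $$\phi(j;\lambda,\widetilde{S}_k,\widetilde{A}_k)=\max\left\{\frac{1}{\lambda}\left(\frac{\widetilde{s}_{k,\ell}\,\widetilde{a}_{k,\ell}}{\widetilde{s}_{k,j}}-(1-\lambda)\widetilde{a}_{k,j}\right):\ \ell\in\mathcal{J},\ \widetilde{s}_{k,\ell}\widetilde{a}_{k,\ell}>\widetilde{s}_{k,j}\widetilde{a}_{k,j}\right\}.$$ Then for every $j\in\mathcal{J}$ and all trust values $\lambda\ge\lambda'$ in $(0,1]$, $\phi(j;\lambda,\widetilde{S}_k,\widetilde{A}_k)\le\phi(j;\lambda',\widetilde{S}_k,\widetilde{A}_k)$.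
   Context: Interpretation: $\phi(j;\lambda,\widetilde{S}_k,\widetilde{A}_k)$ is the minimum promised audience a recommender system must commit to provider $k$ so that, when $k$ updates its audience belief at $j$ to $(1-\lambda)\widetilde{a}_{k,j}+\lambda C$ upon receiving a promise $C$ and chooses the point maximizing $\widetilde{s}_{k,\cdot}\widetilde{a}_{k,\cdot}$, point $j$ becomes $k$'s best response. *)

theory Defs
  imports Main "HOL.Real"
begin

definition better_points :: "'j set \<Rightarrow> ('j \<Rightarrow> real) \<Rightarrow> ('j \<Rightarrow> real) \<Rightarrow> 'j \<Rightarrow> 'j set" where
  "better_points J s a j = {l \<in> J. s l * a l > s j * a j}"

text \<open>When no point is strictly
  better than j the maximum is over the empty set; we fix the convention 0
  (j is then already a best response; the convention is the same for every lambda).\<close>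
definition phi :: "'j set \<Rightarrow> 'j \<Rightarrow> real \<Rightarrow> ('j \<Rightarrow> real) \<Rightarrow> ('j \<Rightarrow> real) \<Rightarrow> real" where
  "phi J j lam s a =
     (if better_points J s a j = {} then 0
      else Max ((\<lambda>l. (1 / lam) * (s l * a l / s j - (1 - lam) * a j)) ` better_points J s a j))"

end

theory Submission
  imports Defs
begin

lemma key:
  fixes x y sj lam lam' :: real
  assumes "sj > 0" "x > sj * y" "0 < lam'" "lam' \<le> lam"
  shows "(1 / lam) * (x / sj - (1 - lam) * y) \<le> (1 / lam') * (x / sj - (1 - lam') * y)"
proof -
  have d: "x / sj - y > 0" using assms by (simp add: field_simps)
  have e1: "(1 / lam) * (x / sj - (1 - lam) * y) = (x / sj - y) / lam + y"
    using assms by (simp add: field_simps)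
  have e2: "(1 / lam') * (x / sj - (1 - lam') * y) = (x / sj - y) / lam' + y"
    using assms by (simp add: field_simps)
  have "(x / sj - y) / lam \<le> (x / sj - y) / lam'"
    using d assms by (intro divide_left_mono) auto
  then show ?thesis using e1 e2 by simp
qed

theorem lemma1:
  fixes J :: "'j set" and s a :: "'j \<Rightarrow> real" and j :: 'j and lam lam' :: real
  assumes "finite J"
    and "\<And>l. l \<in> J \<Longrightarrow> 0 < s l \<and> s l \<le> 1"
    and "\<And>l. l \<in> J \<Longrightarrow> 0 \<le> a l"
    and "j \<in> J"
    and "0 < lam'" and "lam' \<le> lam" and "lam \<le> 1"
  shows "phi J j lam s a \<le> phi J j lam' s a"
proof (cases "better_points J s a j = {}")
  case True
  then show ?thesis by (simp add: phi_def)
next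
  case False
  let ?B = "better_points J s a j"
  have fin: "finite ?B" using assms(1) by (simp add: better_points_def)
  have sj: "s j > 0" using assms(2,4) by blast
  have "Max ((\<lambda>l. (1 / lam) * (s l * a l / s j - (1 - lam) * a j)) ` ?B)
     \<le> Max ((\<lambda>l. (1 / lam') * (s l * a l / s j - (1 - lam') * a j)) ` ?B)"
  proof (rule Max.boundedI)
    show "finite ((\<lambda>l. (1 / lam) * (s l * a l / s j - (1 - lam) * a j)) ` ?B)" using fin by simp
    show "(\<lambda>l. (1 / lam) * (s l * a l / s j - (1 - lam) * a j)) ` ?B \<noteq> {}" using False by simp
    fix y assume "y \<in> (\<lambda>l. (1 / lam) * (s l * a l / s j - (1 - lam) * a j)) ` ?B"
    then obtain l where l: "l \<in> ?B" and y: "y = (1 / lam) * (s l * a l / s j - (1 - lam) * a j)" by blast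
    have "s l * a l > s j * a j" using l by (simp add: better_points_def)
    then have "y \<le> (1 / lam') * (s l * a l / s j - (1 - lam') * a j)"
      using y key[OF sj _ assms(5,6)] by blast
    also have "\<dots> \<le> Max ((\<lambda>l. (1 / lam') * (s l * a l / s j - (1 - lam') * a j)) ` ?B)"
      using fin l by (intro Max_ge) auto
    finally show "y \<le> \<dots>" .
  qed
  then show ?thesis using False by (simp add: phi_def)
qed

end
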